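(* For $|q|<1$ and nonzero complex $z$ (with the expressions defined), \begin{align*} S_{F3}(z,q)&=\frac{(zq,z^{-1}q,q^2;q^2)_\infty}{(z,z^{-1},q;q^2)_\infty}-\frac{(q;q)_\infty}{(z,z^{-1};q^2)_\infty},\\ S_{G4}(z,q)&=\frac{z(-z^{-1}q,-zq^3,q^4;q^4)_\infty}{(1+z)(z,z^{-1};q^2)_\infty}+\frac{(-zq,-z^{-1}q^3,q^4;q^4)_\infty}{(1+z)(z,z^{-1};q^2)_\infty}-\frac{(q^2;q^2)_\infty}{(q,z,z^{-1};q^2)_\infty},\\ S_{AG4}(z,q)&=\frac{z(-zq,-z^{-1}q^3,q^4;q^4)_\infty}{(1+z)(z,z^{-1};q^2)_\infty}+\frac{(-z^{-1}q,-zq^3,q^4;q^4)_\infty}{(1+z)(z,z^{-1};q^2)_\infty}-\frac{(q^2;q^2)_\infty}{(q,z,z^{-1};q^2)_\infty}. \end{align*}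
   Context: Notation: $(z;q)_n=\prod_{j=0}^{n-1}(1-zq^j)$, $(z;q)_\infty=\prod_{j\ge0}(1-zq^j)$, $(z_1,\dots,z_k;q)_n=(z_1;q)_n\cdots(z_k;q)_n$ (also for $n=\infty$). Define \begin{align*} S_{F3}(z,q)&=\frac{(q;q)_\infty}{(z,z^{-1};q^2)_\infty}\sum_{n=1}^\infty\frac{(z,z^{-1};q^2)_nq^n}{(q;q)_{2n}},\\ S_{G4}(z,q)&=\frac{(q^4;q^4)_\infty(-q;q^2)_\infty}{(z,z^{-1};q^2)_\infty}\sum_{n=1}^\infty\frac{(z,z^{-1};q^2)_n(-1)^nq^{n^2+2n}}{(q^4;q^4)_n(-q;q^2)_n},\\ S_{AG4}(z,q)&=\frac{(q^4;q^4)_\infty(-q;q^2)_\infty}{(z,z^{-1};q^2)_\infty}\sum_{n=1}^\infty\frac{(z,z^{-1};q^2)_n(-1)^nq^{n^2}}{(q^4;q^4)_n(-q;q^2)_n}. \end{align*} *)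

theory Defs
  imports "HOL-Analysis.Analysis"
begin

definition qpoch :: "complex \<Rightarrow> complex \<Rightarrow> nat \<Rightarrow> complex" where
  "qpoch z q n = (\<Prod>j<n. 1 - z * q ^ j)"

definition qpoch_inf :: "complex \<Rightarrow> complex \<Rightarrow> complex" where
  "qpoch_inf z q = (\<Prod>j. 1 - z * q ^ j)"

definition S_F3 :: "complex \<Rightarrow> complex \<Rightarrow> complex" where
  "S_F3 z q = qpoch_inf q q / (qpoch_inf z (q^2) * qpoch_inf (inverse z) (q^2)) *
     (\<Sum>n. if n = 0 then 0 else
        qpoch z (q^2) n * qpoch (inverse z) (q^2) n * q ^ n / qpoch q q (2 * n))"

definition S_G4 :: "complex \<Rightarrow> complex \<Rightarrow> complex" where
  "S_G4 z q = qpoch_inf (q^4) (q^4) * qpoch_inf (-q) (q^2)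
       / (qpoch_inf z (q^2) * qpoch_inf (inverse z) (q^2)) *
     (\<Sum>n. if n = 0 then 0 else
        qpoch z (q^2) n * qpoch (inverse z) (q^2) n * (-1) ^ n * q ^ (n^2 + 2*n)
          / (qpoch (q^4) (q^4) n * qpoch (-q) (q^2) n))"

definition S_AG4 :: "complex \<Rightarrow> complex \<Rightarrow> complex" where
  "S_AG4 z q = qpoch_inf (q^4) (q^4) * qpoch_inf (-q) (q^2)
       / (qpoch_inf z (q^2) * qpoch_inf (inverse z) (q^2)) *
     (\<Sum>n. if n = 0 then 0 else
        qpoch z (q^2) n * qpoch (inverse z) (q^2) n * (-1) ^ n * q ^ (n^2)
          / (qpoch (q^4) (q^4) n * qpoch (-q) (q^2) n))"

end

theory Submission
  imports Defs
begin


lemma qpoch_0[simp]: "qpoch x p 0 = 1" by (simp add: qpoch_def)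
lemma qpoch_Suc: "qpoch x p (Suc n) = qpoch x p n * (1 - x*p^n)"
  by (simp add: qpoch_def)

lemma qpoch_shift: "qpoch (x*p) p n * (1 - x) = qpoch x p n * (1 - x*p^n)"
proof (induction n)
  case 0 then show ?case by simp
next
  case (Suc n)
  have "qpoch (x*p) p (Suc n) * (1 - x) = (qpoch (x*p) p n * (1 - x)) * (1 - x*p*p^n)"
    by (simp add: qpoch_Suc algebra_simps)
  also have "\<dots> = qpoch x p n * (1 - x*p^n) * (1 - x*p^Suc n)" using Suc by simp
  also have "\<dots> = qpoch x p (Suc n) * (1 - x*p^Suc n)" by (simp add: qpoch_Suc)
  finally show ?case .
qed

lemma qpoch_nonzero: assumes "\<And>j. norm (x*p^j) < 1" shows "qpoch x p n \<noteq> 0"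
proof -
  have "1 - x*p^j \<noteq> 0" for j
  proof
    assume "1 - x*p^j = 0" then have "x*p^j = 1" by simp
    with assms[of j] show False by simp
  qed
  then show ?thesis by (simp add: qpoch_def)
qed

lemma qpoch_conv: fixes x p :: complex assumes "norm p < 1" shows "convergent_prod (\<lambda>j. 1 - x*p^j)"
proof -
  have "summable (\<lambda>j. norm x * norm p ^ j)"
    using assms by (intro summable_mult summable_geometric) auto
  moreover have "(\<lambda>j. norm ((1 - x*p^j) - 1)) = (\<lambda>j. norm x * norm p ^ j)"
    by (simp add: norm_mult norm_power)
  ultimately have "summable (\<lambda>j. norm ((1 - x*p^j) - 1))" by simp
  then show ?thesis
    by (intro abs_convergent_prod_imp_convergent_prod summable_imp_abs_convergent_prod)
qed

lemma qpoch_tendsto: assumes "norm p < 1" shows "(\<lambda>K. qpoch x p K) \<longlonglongrightarrow> qpoch_inf x p"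
proof -
  have "(\<lambda>n. \<Prod>i\<le>n. 1 - x*p^i) \<longlonglongrightarrow> qpoch_inf x p"
    using convergent_prod_LIMSEQ[OF qpoch_conv[OF assms]] unfolding qpoch_inf_def .
  then have "(\<lambda>n. qpoch x p (Suc n)) \<longlonglongrightarrow> qpoch_inf x p"
    by (simp add: qpoch_def lessThan_Suc_atMost)
  then show ?thesis by (rule LIMSEQ_imp_Suc)
qed

lemma qpoch_inf_nonzero: assumes "norm p < 1" "\<And>j. norm (x*p^j) < 1" shows "qpoch_inf x p \<noteq> 0"
proof -
  have "1 - x*p^j \<noteq> 0" for j
  proof
    assume "1 - x*p^j = 0" then have "x*p^j = 1" by simp
    with assms(2)[of j] show False by simp
  qed
  then show ?thesis unfolding qpoch_inf_def by (intro prodinf_nonzero qpoch_conv assms)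
qed

lemma qpoch_double: "qpoch x p (2*K) = (\<Prod>k<K. (1 - x*p^(2*k)) * (1 - x*p^(2*k+1)))"
  by (induction K) (simp_all add: qpoch_Suc)

lemma qpoch_split: "qpoch x x (2*K) = qpoch x (x^2) K * qpoch (x^2) (x^2) K"
proof -
  have "qpoch x x (2*K) = (\<Prod>k<K. (1 - x*x^(2*k)) * (1 - x*x^(2*k+1)))" by (rule qpoch_double)
  also have "\<dots> = (\<Prod>k<K. (1 - x*(x^2)^k) * (1 - x^2*(x^2)^k))"
  proof (intro prod.cong refl)
    fix k
    have e: "(x^2)^k = x^(2*k)" by (simp add: power_mult)
    show "(1 - x*x^(2*k)) * (1 - x*x^(2*k+1)) = (1 - x*(x^2)^k) * (1 - x^2*(x^2)^k)"
      unfolding e by (simp add: power2_eq_square)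
  qed
  also have "\<dots> = qpoch x (x^2) K * qpoch (x^2) (x^2) K" by (simp add: qpoch_def prod.distrib)
  finally show ?thesis .
qed

lemma qpoch_pm: "qpoch (-x) y K * qpoch x y K = qpoch (x^2) (y^2) K"
  by (induction K) (simp_all add: qpoch_Suc algebra_simps power2_eq_square power_mult_distrib)

lemma qpoch_inf_double: assumes "norm p < 1"
  shows "(\<lambda>K. qpoch x p (2*K)) \<longlonglongrightarrow> qpoch_inf x p"
proof -
  have "strict_mono (\<lambda>K::nat. 2*K)" by (auto simp: strict_mono_def)
  from LIMSEQ_subseq_LIMSEQ[OF qpoch_tendsto[OF assms] this] show ?thesis by (simp add: o_def)
qed

lemma qpoch_inf_split: assumes "norm x < 1"
  shows "qpoch_inf x x = qpoch_inf x (x^2) * qpoch_inf (x^2) (x^2)"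
proof -
  have n2: "norm (x^2) < 1" using assms by (simp add: norm_power power_less_one_iff) 
  have "(\<lambda>K. qpoch x x (2*K)) \<longlonglongrightarrow> qpoch_inf x x" by (rule qpoch_inf_double[OF assms])
  moreover have "(\<lambda>K. qpoch x x (2*K)) \<longlonglongrightarrow> qpoch_inf x (x^2) * qpoch_inf (x^2) (x^2)"
    unfolding qpoch_split by (intro tendsto_mult qpoch_tendsto n2)
  ultimately show ?thesis by (rule LIMSEQ_unique)
qed

lemma qpoch_inf_pm: assumes "norm y < 1"
  shows "qpoch_inf (-x) y * qpoch_inf x y = qpoch_inf (x^2) (y^2)"
proof -
  have n2: "norm (y^2) < 1" using assms by (simp add: norm_power power_less_one_iff) 
  have "(\<lambda>K. qpoch (-x) y K * qpoch x y K) \<longlonglongrightarrow> qpoch_inf (-x) y * qpoch_inf x y"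
    by (intro tendsto_mult qpoch_tendsto assms)
  moreover have "(\<lambda>K. qpoch (-x) y K * qpoch x y K) \<longlonglongrightarrow> qpoch_inf (x^2) (y^2)"
    unfolding qpoch_pm by (intro qpoch_tendsto n2)
  ultimately show ?thesis by (rule LIMSEQ_unique)
qed



definition T :: "(nat \<Rightarrow> complex) \<Rightarrow> complex \<Rightarrow> complex \<Rightarrow> nat \<Rightarrow> complex" where
  "T a p x n = a n * x^n / qpoch x p n"
definition phi :: "(nat \<Rightarrow> complex) \<Rightarrow> complex \<Rightarrow> complex \<Rightarrow> complex" where
  "phi a p x = suminf (T a p x)"
definition PB :: "complex \<Rightarrow> real \<Rightarrow> nat \<Rightarrow> real" where
  "PB p r n = (\<Prod>j<n. 1 - r * norm p ^ j)"
definition MB :: "(nat \<Rightarrow> complex) \<Rightarrow> complex \<Rightarrow> real \<Rightarrow> nat \<Rightarrow> real" where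
  "MB a p r n = norm (a n) * r^n / PB p r n"

lemma PB_pos: assumes "norm p \<le> 1" "0 \<le> r" "r < 1" shows "PB p r n > 0"
proof -
  have "r * norm p ^ j < 1" for j
  proof -
    have "norm p ^ j \<le> 1" using assms by (simp add: power_le_one)
    then have "r * norm p ^ j \<le> r" using assms by (simp add: mult_left_le)
    then show ?thesis using assms by simp
  qed
  then show ?thesis unfolding PB_def by (intro prod_pos) auto
qed

lemma PB_le: assumes "norm p \<le> 1" "norm x \<le> r" "r < 1" shows "PB p r n \<le> norm (qpoch x p n)"
proof -
  have "0 \<le> 1 - r * norm p ^ j \<and> 1 - r * norm p ^ j \<le> norm (1 - x*p^j)" for j
  proof -
    have np: "norm p ^ j \<le> 1" using assms by (simp add: power_le_one)
    have r0: "0 \<le> r" using assms(2) norm_ge_zero order_trans by blast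
    then have "r * norm p ^ j \<le> r" using np by (simp add: mult_left_le)
    moreover have "norm x * norm p ^ j \<le> r * norm p ^ j" using assms by (simp add: mult_right_mono)
    moreover have "1 - norm (x*p^j) \<le> norm (1 - x*p^j)"
      by (metis norm_one norm_triangle_ineq2)
    ultimately show ?thesis using assms by (simp add: norm_mult norm_power)
  qed
  then have "PB p r n \<le> (\<Prod>j<n. norm (1 - x*p^j))" unfolding PB_def by (intro prod_mono) auto
  also have "\<dots> = norm (qpoch x p n)" by (simp add: qpoch_def prod_norm)
  finally show ?thesis .
qed

lemma T_bound: assumes "norm p \<le> 1" "norm x \<le> r" "r < 1"
  shows "norm (T a p x n) \<le> norm (a n) * norm x ^ n / PB p r n"
proof -
  have r0: "0 \<le> r" using assms(2) norm_ge_zero order_trans by blast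
  have "norm (T a p x n) = norm (a n) * norm x ^ n / norm (qpoch x p n)"
    by (simp add: T_def norm_mult norm_divide norm_power)
  also have "\<dots> \<le> norm (a n) * norm x ^ n / PB p r n"
  proof -
    have "0 < PB p r n" "PB p r n \<le> norm (qpoch x p n)"
      using PB_pos[OF assms(1) r0 assms(3)] PB_le[OF assms] by auto
    moreover have "0 < norm (qpoch x p n)" using calculation by linarith
    ultimately show ?thesis by (intro divide_left_mono) auto
  qed
  finally show ?thesis .
qed

lemma MB_summable:
  assumes p: "norm p < 1" and r: "0 \<le> r" "r < 1"
    and rec: "\<And>n. a (Suc n) = a n * \<beta> n" and lim: "\<beta> \<longlonglongrightarrow> \<beta>0" and b0: "norm \<beta>0 * r < 1"
  shows "summable (MB a p r)"
proof -
  define \<rho> where "\<rho> n = norm (\<beta> n) * r / (1 - r * norm p ^ n)" for n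
  have "(\<lambda>n. norm p ^ n) \<longlonglongrightarrow> 0" using LIMSEQ_realpow_zero[of "norm p"] p by simp
  then have "\<rho> \<longlonglongrightarrow> norm \<beta>0 * r / (1 - r * 0)"
    unfolding \<rho>_def using p by (intro tendsto_intros lim) auto
  then have "\<rho> \<longlonglongrightarrow> norm \<beta>0 * r" by simp
  moreover have "norm \<beta>0 * r < (1 + norm \<beta>0 * r) / 2"
  proof -
    have h: "\<And>t::real. t < 1 \<Longrightarrow> t < (1 + t) / 2" by simp
    show ?thesis by (rule h[OF b0])
  qed
  ultimately have "eventually (\<lambda>n. \<rho> n < (1 + norm \<beta>0 * r) / 2) sequentially"
    by (rule order_tendstoD)
  then obtain N where N: "\<And>n. n \<ge> N \<Longrightarrow> \<rho> n < (1 + norm \<beta>0 * r) / 2"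
    by (auto simp: eventually_sequentially)
  show ?thesis
  proof (rule summable_ratio_test)
    show "(1 + norm \<beta>0 * r) / 2 < 1" using b0 by simp
    fix n assume n: "n \<ge> N"
    have pn: "PB p r n > 0" using PB_pos[of p r n] p r by simp
    have rn: "r * norm p ^ n < 1"
    proof -
      have "norm p ^ n \<le> 1" using p by (simp add: power_le_one)
      then have "r * norm p ^ n \<le> r" using r by (simp add: mult_left_le)
      then show ?thesis using r by simp
    qed
    have M0: "MB a p r n \<ge> 0" unfolding MB_def using pn r by simp
    have "MB a p r n * \<rho> n = (norm (a n) * r^n * (norm (\<beta> n) * r)) / (PB p r n * (1 - r*norm p^n))"
      unfolding MB_def \<rho>_def by (rule times_divide_times_eq)
    also have "\<dots> = norm (a n) * norm (\<beta> n) * r^(Suc n) / (PB p r n * (1 - r*norm p^n))"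
      by (simp add: mult_ac)
    also have "\<dots> = MB a p r (Suc n)" unfolding MB_def by (simp add: rec norm_mult PB_def)
    finally have "MB a p r (Suc n) = MB a p r n * \<rho> n" by simp
    also have "\<dots> \<le> MB a p r n * ((1 + norm \<beta>0 * r) / 2)"
      using N[OF n] M0 by (intro mult_left_mono) auto
    finally have "MB a p r (Suc n) \<le> (1 + norm \<beta>0 * r) / 2 * MB a p r n" by (simp add: mult_ac)
    moreover have "MB a p r (Suc n) \<ge> 0"
      unfolding MB_def using PB_pos[of p r "Suc n"] p r by simp
    ultimately show "norm (MB a p r (Suc n)) \<le> (1 + norm \<beta>0 * r) / 2 * norm (MB a p r n)"
      using M0 by simp
  qed
qed

locale philoc =
  fixes a :: "nat \<Rightarrow> complex" and p :: complex and r :: real and \<beta> :: "nat \<Rightarrow> complex" and \<beta>0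
  assumes p: "norm p < 1" and r: "0 < r" "r < 1"
    and rec: "\<And>n. a (Suc n) = a n * \<beta> n" and lim: "\<beta> \<longlonglongrightarrow> \<beta>0" and b0: "norm \<beta>0 * r < 1"
begin

lemma MBs: "summable (MB a p r)"
  using MB_summable[OF p _ r(2) rec lim b0] r by simp

lemma T_le_MB: assumes "norm x \<le> r" shows "norm (T a p x n) \<le> MB a p r n"
proof -
  have "norm (T a p x n) \<le> norm (a n) * norm x ^ n / PB p r n"
    using T_bound[OF _ assms r(2)] p by simp
  also have "\<dots> \<le> MB a p r n" unfolding MB_def
    using PB_pos[of p r n] p r assms
    by (intro divide_right_mono mult_left_mono power_mono) auto
  finally show ?thesis .
qed

lemma T_summable: assumes "norm x \<le> r" shows "summable (T a p x)"
  by (rule summable_comparison_test'[OF MBs T_le_MB[OF assms]])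

lemma T_0: "T a p x 0 = a 0" by (simp add: T_def)

lemma phi_near0: assumes "norm x \<le> r"
  shows "norm (phi a p x - a 0) \<le> norm x / r * (\<Sum>n. MB a p r (Suc n))"
proof -
  have MBs': "summable (\<lambda>n. MB a p r (Suc n))" using MBs by (simp add: summable_Suc_iff)
  have bnd: "norm (T a p x (Suc n)) \<le> norm x / r * MB a p r (Suc n)" for n
  proof -
    have p1: "norm p \<le> 1" using p by simp
    have "norm (T a p x (Suc n)) \<le> norm (a (Suc n)) * norm x ^ Suc n / PB p r (Suc n)"
      by (rule T_bound[OF p1 assms r(2)])
    also have "\<dots> \<le> norm x / r * MB a p r (Suc n)"
    proof -
      have "norm x ^ n \<le> r ^ n" using assms by (intro power_mono) auto
      then have "norm x ^ Suc n \<le> norm x * r ^ n" by (simp add: mult_left_mono)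
      then have "norm (a (Suc n)) * norm x ^ Suc n / PB p r (Suc n) \<le> norm (a (Suc n)) * (norm x * r ^ n) / PB p r (Suc n)"
        using PB_pos[of p r "Suc n"] p r by (intro divide_right_mono mult_left_mono) auto
      also have "\<dots> = norm x / r * MB a p r (Suc n)" unfolding MB_def using r by (simp add: field_simps)
      finally show ?thesis .
    qed
    finally show ?thesis .
  qed
  have s1: "summable (\<lambda>n. norm x / r * MB a p r (Suc n))" by (intro summable_mult MBs')
  have s2: "summable (\<lambda>n. norm (T a p x (Suc n)))"
    by (rule summable_comparison_test'[OF s1]) (use bnd in auto)
  have "phi a p x - a 0 = (\<Sum>n. T a p x (Suc n))"
    unfolding phi_def using suminf_split_head[OF T_summable[OF assms]] T_0 by simp
  also have "norm \<dots> \<le> (\<Sum>n. norm (T a p x (Suc n)))" by (rule summable_norm[OF s2])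
  also have "\<dots> \<le> (\<Sum>n. norm x / r * MB a p r (Suc n))" by (intro suminf_le s1 s2 bnd)
  also have "\<dots> = norm x / r * (\<Sum>n. MB a p r (Suc n))" by (intro suminf_mult MBs')
  finally show ?thesis .
qed

lemma phi_tendsto0: assumes "x \<longlonglongrightarrow> 0" "\<And>K. norm (x K) \<le> r"
  shows "(\<lambda>K. phi a p (x K)) \<longlonglongrightarrow> a 0"
proof -
  have "(\<lambda>K. norm (x K) / r * (\<Sum>n. MB a p r (Suc n))) \<longlonglongrightarrow> 0 / r * (\<Sum>n. MB a p r (Suc n))"
    using r by (intro tendsto_intros assms tendsto_norm_zero) auto
  moreover have "\<forall>K. norm (phi a p (x K) - a 0) \<le> norm (x K) / r * (\<Sum>n. MB a p r (Suc n))"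
    using phi_near0 assms(2) by blast
  ultimately have "(\<lambda>K. phi a p (x K) - a 0) \<longlonglongrightarrow> 0"
    using Lim_null_comparison[OF always_eventually] by simp
  then show ?thesis by (simp add: LIM_zero_iff)
qed

end

lemma iterate_feq:
  fixes F R :: "complex \<Rightarrow> complex"
  assumes "\<And>y. norm y \<le> norm c \<Longrightarrow> F y = R y * F (\<rho> * y)" "norm \<rho> \<le> 1"
  shows "F c = (\<Prod>k<K. R (\<rho>^k * c)) * F (\<rho>^K * c)"
proof (induction K)
  case 0 then show ?case by simp
next
  case (Suc K)
  have "norm (\<rho>^K * c) \<le> norm c"
    using assms(2) by (simp add: norm_mult norm_power mult_left_le_one_le power_le_one)
  then have "F (\<rho>^K * c) = R (\<rho>^K * c) * F (\<rho>^Suc K * c)" using assms(1) by (simp add: mult_ac)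
  with Suc show ?case by (simp add: mult_ac)
qed



lemma algF2: fixes K W X y z iz :: complex
  assumes "W*(1-y*X) = 1" "z * iz = 1"
  shows "(1-y)^2*K - (1-y*z)*(1-y*iz)*(K*X*(1-y)*W) = (1-y)*(K*(1-X) - K*((1-z*X)*(1-iz*X))*y*W)"
  using assms by algebra

lemma algB2: fixes K W V X y b ib p :: complex
  assumes "W*(1-y*X) = 1" "V*(1-y*p*X) = 1" "b*ib = 1"
  shows "(1-y)*(1-y*p)*K - (1-y*p*ib)*(1-b*y)*(K*X^2*(1-y)*(1-y*p)*W*V)
     = (1-y)*(1-y*p)*(K*(1-X^2)*W - K*((1-b*X)*(1-p*ib*X))*X*y*W*V)"
  using assms by algebra

lemma norm_xp_less: fixes x p :: complex assumes "norm x < 1" "norm p \<le> 1" shows "norm (x*p^j) < 1"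
proof -
  have "norm (p^j) \<le> 1" using assms(2) by (simp add: norm_power power_le_one)
  then have "norm x * norm (p^j) \<le> norm x" by (simp add: mult_left_le)
  then show ?thesis using assms(1) by (simp add: norm_mult)
qed

definition aF :: "complex \<Rightarrow> complex \<Rightarrow> nat \<Rightarrow> complex" where
  "aF z p n = qpoch z p n * qpoch (inverse z) p n / qpoch p p n"
definition \<beta>F :: "complex \<Rightarrow> complex \<Rightarrow> nat \<Rightarrow> complex" where
  "\<beta>F z p n = (1 - z*p^n)*(1 - inverse z*p^n)/(1 - p*p^n)"

lemma aF_rec: "aF z p (Suc n) = aF z p n * \<beta>F z p n"
proof -
  have "aF z p n * \<beta>F z p n = (qpoch z p n * qpoch (inverse z) p n * ((1 - z*p^n)*(1 - inverse z*p^n)))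
          / (qpoch p p n * (1 - p*p^n))"
    unfolding aF_def \<beta>F_def by (rule times_divide_times_eq)
  also have "\<dots> = aF z p (Suc n)" unfolding aF_def by (simp add: qpoch_Suc mult_ac)
  finally show ?thesis by simp
qed

lemma aF_0: "aF z p 0 = 1" by (simp add: aF_def)

lemma \<beta>F_lim: assumes "norm p < 1" shows "\<beta>F z p \<longlonglongrightarrow> 1"
proof -
  have "(\<lambda>n. p^n) \<longlonglongrightarrow> 0" by (rule LIMSEQ_power_zero[OF assms])
  then have "\<beta>F z p \<longlonglongrightarrow> (1 - z*0)*(1 - inverse z*0)/(1 - p*0)"
    unfolding \<beta>F_def by (intro tendsto_intros) (use assms in auto)
  then show ?thesis by simp
qed

lemma feqF:
  assumes p: "norm p < 1" and r: "0 < r" "r < 1" and z: "z \<noteq> 0" and y: "norm y \<le> r"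
  shows "(1-y)^2 * phi (aF z p) p y = (1-y*z)*(1-y*inverse z) * phi (aF z p) p (p*y)"
proof -
  interpret philoc "aF z p" p r "\<beta>F z p" 1
    using p r by unfold_locales (auto simp: aF_rec \<beta>F_lim)
  have p1: "norm p \<le> 1" using p by simp
  have y1: "norm y < 1" using y r by simp
  have py: "norm (p*y) \<le> r"
    using y p1 by (simp add: norm_mult) (metis mult_left_le_one_le norm_ge_zero order_trans)
  define t where "t = T (aF z p) p y"
  define t' where "t' = T (aF z p) p (p*y)"
  define G where "G n = t n * (1 - p^n)" for n
  define c where "c = (1-y*z)*(1-y*inverse z)"
  have st: "summable t" unfolding t_def by (rule T_summable[OF y])
  have st': "summable t'" unfolding t'_def by (rule T_summable[OF py])
  have key: "(1-y)^2 * t n - c * t' n = (1-y)*(G n - G (Suc n))" for n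
  proof -
    define A where "A = aF z p n"
    define Q where "Q = qpoch y p n"
    define X where "X = p^n"
    define K where "K = A*y^n/Q"
    define W where "W = 1/(1-y*X)"
    have yX: "1 - y*X \<noteq> 0" using norm_xp_less[OF y1 p1, of n] unfolding X_def by auto
    have y0: "1 - y \<noteq> 0" using y1 by auto
    have pX: "1 - p*X \<noteq> 0" using norm_xp_less[OF p p1, of n] unfolding X_def by auto
    have Q0: "Q \<noteq> 0" unfolding Q_def by (rule qpoch_nonzero[OF norm_xp_less[OF y1 p1]])
    have W: "W*(1-y*X) = 1" unfolding W_def using yX by simp
    have zz: "z * inverse z = 1" using z by simp
    have tn: "t n = K" unfolding t_def T_def K_def A_def Q_def ..
    have Qs: "qpoch (p*y) p n = Q*(1-y*X)/(1-y)"
      using qpoch_shift[of y p n] y0 unfolding Q_def X_def by (simp add: field_simps mult.commute)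
    have t'n: "t' n = K*X*(1-y)*W"
      unfolding t'_def T_def Qs K_def W_def A_def[symmetric] using y0 yX Q0
      by (simp add: X_def power_mult_distrib field_simps)
    have GS: "G (Suc n) = K*((1-z*X)*(1-inverse z*X))*y*W"
    proof -
      have "G (Suc n) = A * \<beta>F z p n * (y^n*y) / (Q*(1-y*X)) * (1-p*X)"
        unfolding G_def t_def T_def A_def Q_def X_def by (simp add: aF_rec qpoch_Suc mult_ac)
      also have "\<dots> = K*((1-z*X)*(1-inverse z*X))*y*W"
      proof -
        define d where "d = (1-z*X)*(1-inverse z*X)"
        have b: "\<beta>F z p n = d/(1-p*X)" unfolding \<beta>F_def d_def X_def ..
        define u where "u = 1-y*X"
        define v where "v = 1-p*X"
        have u: "u \<noteq> 0" "v \<noteq> 0" using yX pX unfolding u_def v_def by auto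
        show ?thesis unfolding b d_def[symmetric] K_def W_def u_def[symmetric] v_def[symmetric]
          using u Q0 by (simp add: field_simps)
      qed
      finally show ?thesis .
    qed
    have Gn: "G n = K*(1-X)" unfolding G_def tn X_def ..
    show ?thesis unfolding tn t'n GS Gn c_def by (rule algF2[OF W zz])
  qed
  have "t \<longlonglongrightarrow> 0" by (rule summable_LIMSEQ_zero[OF st])
  moreover have "(\<lambda>n. p^n) \<longlonglongrightarrow> 0" by (rule LIMSEQ_power_zero[OF p])
  ultimately have "G \<longlonglongrightarrow> 0 * (1 - 0)" unfolding G_def by (intro tendsto_intros) (use p in auto)
  then have "(\<lambda>n. G n - G (Suc n)) sums (G 0 - 0)" by (intro telescope_sums') simp
  then have "(\<lambda>n. (1-y) * (G n - G (Suc n))) sums ((1-y) * 0)"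
    using sums_mult by (fastforce simp: G_def)
  then have s1: "(\<lambda>n. (1-y)^2 * t n - c * t' n) sums 0" unfolding key by simp
  have s2: "(\<lambda>n. (1-y)^2 * t n - c * t' n) sums ((1-y)^2 * suminf t - c * suminf t')"
    by (intro sums_diff sums_mult summable_sums st st')
  from sums_unique2[OF s1 s2] show ?thesis unfolding phi_def t_def t'_def c_def by simp
qed

lemma gauss_special:
  assumes p: "norm p < 1" and c: "norm c < 1" and z: "z \<noteq> 0"
  shows "summable (T (aF z p) p c)"
    "phi (aF z p) p c = qpoch_inf (c*z) p * qpoch_inf (c*inverse z) p / (qpoch_inf c p)^2"
proof -
  define r where "r = (1 + norm c)/2"
  have rr: "0 < r" "r < 1" "norm c \<le> r" unfolding r_def using c norm_ge_zero[of c] by (simp_all add: add_pos_nonneg)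
  interpret philoc "aF z p" p r "\<beta>F z p" 1
    using p rr by unfold_locales (auto simp: aF_rec \<beta>F_lim)
  show "summable (T (aF z p) p c)" by (rule T_summable[OF rr(3)])
  define F where "F = phi (aF z p) p"
  define R where "R y = (1-y*z)*(1-y*inverse z)/(1-y)^2" for y
  have p1: "norm p \<le> 1" using p by simp
  have feq: "F y = R y * F (p*y)" if "norm y \<le> norm c" for y
  proof -
    have y: "norm y \<le> r" using that rr by simp
    have "1 - y \<noteq> 0" using y rr by auto
    then show ?thesis using feqF[OF p rr(1,2) z y] unfolding F_def R_def by (simp add: field_simps)
  qed
  have it: "F c = (\<Prod>k<K. R (p^k*c)) * F (p^K*c)" for K
    by (rule iterate_feq[where F=F and R=R and \<rho>=p, OF feq p1])
  have pr: "(\<Prod>k<K. R (p^k*c)) = qpoch (c*z) p K * qpoch (c*inverse z) p K / (qpoch c p K)^2" for K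
  proof -
    have "(\<Prod>k<K. R (p^k*c)) = (\<Prod>k<K. (1 - c*z*p^k)*(1 - c*inverse z*p^k) / (1 - c*p^k)^2)"
      unfolding R_def by (intro prod.cong refl) (simp add: mult_ac)
    also have "\<dots> = qpoch (c*z) p K * qpoch (c*inverse z) p K / (qpoch c p K)^2"
      by (simp add: qpoch_def prod_dividef prod.distrib prod_power_distrib)
    finally show ?thesis .
  qed
  have cp: "\<And>j. norm (c*p^j) < 1" using norm_xp_less[OF c p1] by simp
  have nz: "qpoch_inf c p \<noteq> 0" by (rule qpoch_inf_nonzero[OF p cp])
  have "(\<lambda>K. p^K*c) \<longlonglongrightarrow> 0 * c" by (intro tendsto_intros LIMSEQ_power_zero p)
  then have lim0: "(\<lambda>K. p^K*c) \<longlonglongrightarrow> 0" by simp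
  have "(\<lambda>K. F (p^K*c)) \<longlonglongrightarrow> aF z p 0" unfolding F_def
  proof (rule phi_tendsto0[OF lim0])
    fix K
    have "norm (p^K*c) \<le> norm c"
      using p1 by (simp add: norm_mult norm_power mult_left_le_one_le power_le_one)
    then show "norm (p^K*c) \<le> r" using rr(3) by linarith
  qed
  then have "(\<lambda>K. (\<Prod>k<K. R (p^k*c)) * F (p^K*c)) \<longlonglongrightarrow>
        qpoch_inf (c*z) p * qpoch_inf (c*inverse z) p / (qpoch_inf c p)^2 * 1"
    unfolding pr aF_0 using nz by (intro tendsto_intros qpoch_tendsto p) auto
  then have "(\<lambda>K. F c) \<longlonglongrightarrow> qpoch_inf (c*z) p * qpoch_inf (c*inverse z) p / (qpoch_inf c p)^2"
    unfolding it[symmetric] by simp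
  then show "phi (aF z p) p c = qpoch_inf (c*z) p * qpoch_inf (c*inverse z) p / (qpoch_inf c p)^2"
    unfolding F_def by (simp add: LIMSEQ_const_iff)
qed



definition aB :: "complex \<Rightarrow> complex \<Rightarrow> nat \<Rightarrow> complex" where
  "aB b p n = qpoch b p n * qpoch (p/b) p n * p^(n choose 2) / qpoch (p^2) (p^2) n"
definition \<beta>B :: "complex \<Rightarrow> complex \<Rightarrow> nat \<Rightarrow> complex" where
  "\<beta>B b p n = (1 - b*p^n)*(1 - p*inverse b*p^n)*p^n/(1 - p^2*(p^2)^n)"

lemma choose2_Suc: "Suc n choose 2 = (n choose 2) + n"
  by (simp add: numeral_2_eq_2)

lemma aB_rec: "aB b p (Suc n) = aB b p n * \<beta>B b p n"
proof -
  have "aB b p n * \<beta>B b p n = (qpoch b p n * qpoch (p/b) p n * p^(n choose 2) * ((1 - b*p^n)*(1 - p*inverse b*p^n)*p^n))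
          / (qpoch (p^2) (p^2) n * (1 - p^2*(p^2)^n))"
    unfolding aB_def \<beta>B_def by (rule times_divide_times_eq)
  also have "\<dots> = aB b p (Suc n)" unfolding aB_def
    by (simp add: qpoch_Suc choose2_Suc power_add divide_inverse mult_ac)
  finally show ?thesis by simp
qed

lemma aB_0: "aB b p 0 = 1" by (simp add: aB_def numeral_2_eq_2)

lemma \<beta>B_lim: assumes "norm p < 1" shows "\<beta>B b p \<longlonglongrightarrow> 0"
proof -
  have p2: "norm (p^2) < 1" using assms by (simp add: norm_power power_less_one_iff)
  have "(\<lambda>n. p^n) \<longlonglongrightarrow> 0" by (rule LIMSEQ_power_zero[OF assms])
  moreover have "(\<lambda>n. (p^2)^n) \<longlonglongrightarrow> 0" by (rule LIMSEQ_power_zero[OF p2])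
  ultimately have "\<beta>B b p \<longlonglongrightarrow> (1 - b*0)*(1 - p*inverse b*0)*0/(1 - p^2*0)"
    unfolding \<beta>B_def by (intro tendsto_intros) (use assms p2 in auto)
  then show ?thesis by simp
qed

lemma feqB:
  assumes p: "norm p < 1" and r: "0 < r" "r < 1" and b: "b \<noteq> 0" and y: "norm y \<le> r"
  shows "(1-y)*(1-y*p) * phi (aB b p) p y = (1-y*p*inverse b)*(1-b*y) * phi (aB b p) p (p^2*y)"
proof -
  interpret philoc "aB b p" p r "\<beta>B b p" 0
    using p r by unfold_locales (auto simp: aB_rec \<beta>B_lim)
  have p1: "norm p \<le> 1" using p by simp
  have y1: "norm y < 1" using y r by simp
  have p21: "norm (p^2) \<le> 1" using p1 by (simp add: norm_power power_le_one)
  have py: "norm (p^2*y) \<le> r"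
    using y p21 by (simp add: norm_mult) (metis mult_left_le_one_le norm_ge_zero order_trans)
  define t where "t = T (aB b p) p y"
  define t' where "t' = T (aB b p) p (p^2*y)"
  define G where "G n = t n * (1 - (p^n)^2) / (1 - y*p^n)" for n
  define c where "c = (1-y*p*inverse b)*(1-b*y)"
  have st: "summable t" unfolding t_def by (rule T_summable[OF y])
  have st': "summable t'" unfolding t'_def by (rule T_summable[OF py])
  have key: "(1-y)*(1-y*p) * t n - c * t' n = (1-y)*(1-y*p)*(G n - G (Suc n))" for n
  proof -
    define A where "A = aB b p n"
    define Q where "Q = qpoch y p n"
    define X where "X = p^n"
    define K where "K = A*y^n/Q"
    define W where "W = 1/(1-y*X)"
    define V where "V = 1/(1-y*p*X)"
    define u where "u = 1-y*X"
    define v where "v = 1-y*p*X"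
    define w where "w = 1 - p^2*X^2"
    have yX: "u \<noteq> 0" using norm_xp_less[OF y1 p1, of n] unfolding X_def u_def by auto
    have ypX: "v \<noteq> 0"
    proof -
      have "norm (y*p) < 1" using y1 p1 by (simp add: norm_mult) (metis mult_left_le_one_le norm_ge_zero order_le_less_trans mult.commute)
      from norm_xp_less[OF this p1, of n] show ?thesis unfolding X_def v_def by auto
    qed
    have y0: "1 - y \<noteq> 0" using y1 by auto
    have yp0: "1 - y*p \<noteq> 0"
    proof -
      have "norm (y*p) < 1" using y1 p1 by (simp add: norm_mult) (metis mult_left_le_one_le norm_ge_zero order_le_less_trans mult.commute)
      then show ?thesis by auto
    qed
    have w0: "w \<noteq> 0"
    proof -
      have "norm (p^2*X^2) < 1" unfolding X_def
        using norm_xp_less[of "p^2" "p^2" n] p p21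
        by (simp add: norm_power power_less_one_iff power_mult_distrib[symmetric] power_mult[symmetric] mult.commute)
      then show ?thesis unfolding w_def by auto
    qed
    have Q0: "Q \<noteq> 0" unfolding Q_def by (rule qpoch_nonzero[OF norm_xp_less[OF y1 p1]])
    have W: "W*(1-y*X) = 1" unfolding W_def using yX u_def by simp
    have V: "V*(1-y*p*X) = 1" unfolding V_def using ypX v_def by simp
    have bb: "b * inverse b = 1" using b by simp
    have tn: "t n = K" unfolding t_def T_def K_def A_def Q_def ..
    have Qs: "qpoch (p^2*y) p n = Q*(u* v)/((1-y)*(1-y*p))"
    proof -
      have e1: "qpoch (y*p*p) p n * (1 - y*p) = qpoch (y*p) p n * v"
        using qpoch_shift[of "y*p" p n] unfolding v_def X_def by (simp add: mult_ac)
      have e2: "qpoch (y*p) p n * (1 - y) = Q * u"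
        using qpoch_shift[of y p n] unfolding u_def X_def Q_def by (simp add: mult_ac)
      have "qpoch (p^2*y) p n = qpoch (y*p*p) p n" by (simp add: power2_eq_square mult_ac)
      moreover have "qpoch (y*p*p) p n = qpoch (y*p) p n * v / (1-y*p)" using e1 yp0 by (simp add: eq_divide_eq)
      moreover have "qpoch (y*p) p n = Q*u/(1-y)" using e2 y0 by (simp add: eq_divide_eq)
      ultimately show ?thesis by simp
    qed
    have t'n: "t' n = K*X^2*(1-y)*(1-y*p)*W*V"
    proof -
      have "(p^2*y)^n = y^n * X^2" unfolding X_def by (simp add: power_mult_distrib power_mult[symmetric] mult.commute)
      then have "t' n = A*(y^n*X^2)/(Q*(u* v)/((1-y)*(1-y*p)))"
        unfolding t'_def T_def Qs A_def by simp
      also have "\<dots> = K*X^2*(1-y)*(1-y*p)*W*V"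
        unfolding K_def W_def V_def u_def[symmetric] v_def[symmetric] using y0 yp0 yX ypX Q0
        by (simp add: field_simps)
      finally show ?thesis .
    qed
    have GS: "G (Suc n) = K*((1-b*X)*(1-p*inverse b*X))*X*y*W*V"
    proof -
      define d where "d = (1-b*X)*(1-p*inverse b*X)"
      have bt: "\<beta>B b p n = d*X/w" unfolding \<beta>B_def d_def X_def w_def
        by (simp add: power_mult_distrib power_mult[symmetric] mult.commute)
      have "G (Suc n) = A * \<beta>B b p n * (y^n*y) / (Q*u) * (1 - (p*X)^2) / v"
        unfolding G_def t_def T_def A_def Q_def X_def u_def v_def by (simp add: aB_rec qpoch_Suc mult_ac)
      also have "(1 - (p*X)^2) = w" unfolding w_def by (simp add: power_mult_distrib)
      also have "A * \<beta>B b p n * (y^n*y) / (Q*u) * w / v = K*d*X*y*W*V"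
        unfolding bt K_def W_def V_def u_def[symmetric] v_def[symmetric] using yX ypX w0 Q0
        by (simp add: field_simps)
      finally show ?thesis unfolding d_def .
    qed
    have Gn: "G n = K*(1-X^2)*W" unfolding G_def tn X_def W_def by simp
    show ?thesis unfolding tn t'n GS Gn c_def by (rule algB2[OF W V bb])
  qed
  have "t \<longlonglongrightarrow> 0" by (rule summable_LIMSEQ_zero[OF st])
  moreover have "(\<lambda>n. p^n) \<longlonglongrightarrow> 0" by (rule LIMSEQ_power_zero[OF p])
  ultimately have "G \<longlonglongrightarrow> 0 * (1 - 0^2) / (1 - y*0)" unfolding G_def by (intro tendsto_intros) (use p in auto)
  then have "G \<longlonglongrightarrow> 0" by simp
  then have "(\<lambda>n. G n - G (Suc n)) sums (G 0 - 0)" by (intro telescope_sums') simp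
  then have "(\<lambda>n. (1-y)*(1-y*p) * (G n - G (Suc n))) sums ((1-y)*(1-y*p) * 0)"
    using sums_mult by (fastforce simp: G_def)
  then have s1: "(\<lambda>n. (1-y)*(1-y*p) * t n - c * t' n) sums 0" unfolding key by simp
  have s2: "(\<lambda>n. (1-y)*(1-y*p) * t n - c * t' n) sums ((1-y)*(1-y*p) * suminf t - c * suminf t')"
    by (intro sums_diff sums_mult summable_sums st st')
  from sums_unique2[OF s1 s2] show ?thesis unfolding phi_def t_def t'_def c_def by simp
qed

lemma bailey:
  assumes p: "norm p < 1" and c: "norm c < 1" and b: "b \<noteq> 0"
  shows "summable (T (aB b p) p c)"
    "phi (aB b p) p c = qpoch_inf (c*p*inverse b) (p^2) * qpoch_inf (b*c) (p^2) / qpoch_inf c p"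
proof -
  define r where "r = (1 + norm c)/2"
  have rr: "0 < r" "r < 1" "norm c \<le> r" unfolding r_def using c norm_ge_zero[of c] by (simp_all add: add_pos_nonneg)
  interpret philoc "aB b p" p r "\<beta>B b p" 0
    using p rr by unfold_locales (auto simp: aB_rec \<beta>B_lim)
  show "summable (T (aB b p) p c)" by (rule T_summable[OF rr(3)])
  define F where "F = phi (aB b p) p"
  define R where "R y = (1-y*p*inverse b)*(1-b*y)/((1-y)*(1-y*p))" for y
  have p1: "norm p \<le> 1" using p by simp
  have p2: "norm (p^2) < 1" using p by (simp add: norm_power power_less_one_iff)
  have p21: "norm (p^2) \<le> 1" using p2 by simp
  have feq: "F y = R y * F (p^2*y)" if "norm y \<le> norm c" for y
  proof -
    have y: "norm y \<le> r" using that rr by simp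
    have y1: "norm y < 1" using y rr by simp
    have "norm (y*p) < 1" using y1 p1 by (simp add: norm_mult) (metis mult_left_le_one_le norm_ge_zero order_le_less_trans mult.commute)
    then have "1 - y*p \<noteq> 0" by auto
    moreover have "1 - y \<noteq> 0" using y1 by auto
    ultimately have D0: "(1-y)*(1-y*p) \<noteq> 0" by simp
    have sol: "\<And>D a cc bb::complex. D \<noteq> 0 \<Longrightarrow> D * a = cc * bb \<Longrightarrow> a = cc / D * bb"
      by (simp add: field_simps)
    show ?thesis unfolding F_def R_def
      by (rule sol[OF D0 feqB[OF p rr(1,2) b y]])
  qed
  have it: "F c = (\<Prod>k<K. R ((p^2)^k*c)) * F ((p^2)^K*c)" for K
    by (rule iterate_feq[where F=F and R=R and \<rho>="p^2", OF feq p21])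
  have pr: "(\<Prod>k<K. R ((p^2)^k*c)) = qpoch (c*p*inverse b) (p^2) K * qpoch (b*c) (p^2) K / qpoch c p (2*K)" for K
  proof -
    have "(\<Prod>k<K. R ((p^2)^k*c)) = (\<Prod>k<K. (1 - c*p*inverse b*(p^2)^k)*(1 - b*c*(p^2)^k)
             / ((1 - c*p^(2*k))*(1 - c*p^(2*k+1))))"
      unfolding R_def by (intro prod.cong refl) (simp add: power_mult[symmetric] mult_ac)
    also have "\<dots> = qpoch (c*p*inverse b) (p^2) K * qpoch (b*c) (p^2) K / qpoch c p (2*K)"
      unfolding qpoch_double by (simp add: qpoch_def prod_dividef prod.distrib)
    finally show ?thesis .
  qed
  have cp: "\<And>j. norm (c*p^j) < 1" using norm_xp_less[OF c p1] by simp
  have nz: "qpoch_inf c p \<noteq> 0" by (rule qpoch_inf_nonzero[OF p cp])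
  have "(\<lambda>K. (p^2)^K*c) \<longlonglongrightarrow> 0 * c" by (intro tendsto_intros LIMSEQ_power_zero p2)
  then have lim0: "(\<lambda>K. (p^2)^K*c) \<longlonglongrightarrow> 0" by simp
  have "(\<lambda>K. F ((p^2)^K*c)) \<longlonglongrightarrow> aB b p 0" unfolding F_def
  proof (rule phi_tendsto0[OF lim0])
    fix K
    have "norm ((p^2)^K*c) \<le> norm c"
      using p21 by (simp add: norm_mult norm_power mult_left_le_one_le power_le_one)
    then show "norm ((p^2)^K*c) \<le> r" using rr(3) by linarith
  qed
  then have "(\<lambda>K. (\<Prod>k<K. R ((p^2)^k*c)) * F ((p^2)^K*c)) \<longlonglongrightarrow>
        qpoch_inf (c*p*inverse b) (p^2) * qpoch_inf (b*c) (p^2) / qpoch_inf c p * 1"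
    unfolding pr aB_0 using nz by (intro tendsto_intros qpoch_tendsto p2 qpoch_inf_double p) auto
  then have "(\<lambda>K. F c) \<longlonglongrightarrow> qpoch_inf (c*p*inverse b) (p^2) * qpoch_inf (b*c) (p^2) / qpoch_inf c p"
    unfolding it[symmetric] by simp
  then show "phi (aB b p) p c = qpoch_inf (c*p*inverse b) (p^2) * qpoch_inf (b*c) (p^2) / qpoch_inf c p"
    unfolding F_def by (simp add: LIMSEQ_const_iff)
qed



lemma sum_if0: fixes t :: "nat \<Rightarrow> complex" assumes "summable t"
  shows "(\<Sum>n. if n = 0 then 0 else t n) = suminf t - t 0"
proof -
  let ?g = "\<lambda>n. if n = 0 then 0 else t n"
  have "summable (\<lambda>n. ?g (Suc n))" using assms by (simp add: summable_Suc_iff)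
  then have sg: "summable ?g" using summable_Suc_iff[of ?g] by blast
  have "(\<Sum>n. ?g (Suc n)) = suminf ?g - ?g 0" by (rule suminf_split_head[OF sg])
  moreover have "(\<Sum>n. ?g (Suc n)) = suminf t - t 0" using suminf_split_head[OF assms] by simp
  ultimately show ?thesis by simp
qed

lemma qpoch_inf_one: assumes "norm p < 1" shows "qpoch_inf 1 p = 0"
proof -
  have "(\<lambda>K. qpoch 1 p (Suc K)) \<longlonglongrightarrow> qpoch_inf 1 p"
    using qpoch_tendsto[OF assms] by (rule LIMSEQ_Suc)
  moreover have "qpoch 1 p (Suc K) = 0" for K by (induction K) (simp_all add: qpoch_Suc)
  then have "(\<lambda>K. qpoch 1 p (Suc K)) = (\<lambda>K. 0)" by simp
  ultimately show ?thesis by (simp add: LIMSEQ_const_iff)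
qed

lemma q_norms: fixes q :: complex assumes "norm q < 1"
  shows "norm (q^2) < 1" "norm (q^4) < 1" "norm (-q) < 1"
  using assms by (simp_all add: norm_power power_less_one_iff)

lemma part_F3:
  fixes z q :: complex
  assumes q: "norm q < 1" and z: "z \<noteq> 0"
    and D1: "qpoch_inf z (q^2) \<noteq> 0" and D2: "qpoch_inf (inverse z) (q^2) \<noteq> 0"
  shows "S_F3 z q =
           qpoch_inf (z*q) (q^2) * qpoch_inf (inverse z * q) (q^2) * qpoch_inf (q^2) (q^2)
             / (qpoch_inf z (q^2) * qpoch_inf (inverse z) (q^2) * qpoch_inf q (q^2))
         - qpoch_inf q q / (qpoch_inf z (q^2) * qpoch_inf (inverse z) (q^2))"
proof -
  have p: "norm (q^2) < 1" using q_norms[OF q] by simp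
  have p1: "norm (q^2) \<le> 1" using p by simp
  have Pq0: "qpoch_inf q (q^2) \<noteq> 0" by (rule qpoch_inf_nonzero[OF p norm_xp_less[OF q p1]])
  note G = gauss_special[OF p q z]
  have term_eq: "(if n = 0 then 0 else qpoch z (q^2) n * qpoch (inverse z) (q^2) n * q ^ n / qpoch q q (2 * n))
      = (if n = 0 then 0 else T (aF z (q^2)) (q^2) q n)" for n
    unfolding qpoch_split by (simp add: T_def aF_def mult_ac)
  have sum: "(\<Sum>n. if n = 0 then 0 else qpoch z (q^2) n * qpoch (inverse z) (q^2) n * q ^ n / qpoch q q (2 * n))
      = phi (aF z (q^2)) (q^2) q - 1"
    unfolding term_eq sum_if0[OF G(1)] phi_def by (simp add: T_def aF_def)
  have e1: "q*z = z*q" "q*inverse z = inverse z * q" by (simp_all add: mult.commute)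
  show ?thesis unfolding S_F3_def sum G(2) e1 qpoch_inf_split[OF q]
    using Pq0 D1 D2 by (simp add: field_simps power2_eq_square)
qed

lemma sq_exp: "n + 2*(n choose 2) = n^2"
  by (induction n) (simp_all add: choose2_Suc power2_eq_square algebra_simps)

lemma sign_pow: fixes q :: complex shows "(-q)^n * (q^2)^(n choose 2) = (-1)^n * q^(n^2)"
proof -
  have "(-q)^n * (q^2)^(n choose 2) = (-1)^n * (q^n * q^(2*(n choose 2)))"
    by (simp add: power_minus[of q] power_mult)
  also have "q^n * q^(2*(n choose 2)) = q^(n^2)" by (simp add: power_add[symmetric] sq_exp)
  finally show ?thesis .
qed

lemma alg_dec: fixes L P Qb X z iz :: complex
  assumes "L*(1-iz*X) = (1-iz)*P" "L*(1-z*X) = (1-z)*Qb" "z*iz = 1"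
  shows "(z-1)*((1+z)*L - (z*P+Qb)) = 0"
  using assms by algebra

lemma alg_X: fixes L P X z iz :: complex
  assumes "L*(1-iz*X) = (1-iz)*P" "z*iz = 1"
  shows "X * L = z * L - (z - 1) * P"
  using assms by algebra

lemma alg_AG: fixes A1 A2 B1 B2 P4 Pm Pq Dz Di z w :: complex
  assumes "Dz \<noteq> 0" "Di \<noteq> 0" "Pq \<noteq> 0" "Pm \<noteq> 0" "w \<noteq> 0"
  shows "P4 * Pm / (Dz * Di) * ((z * (A1 * A2 / Pm) + B1 * B2 / Pm) / w - 1)
    = z * A2 * A1 * P4 / (w * Dz * Di) + B2 * B1 * P4 / (w * Dz * Di)
      - Pm * Pq * P4 / (Pq * Dz * Di)"
  using assms by (simp add: field_simps)

lemma alg_Gpre: fixes X Y z w :: complex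
  assumes "w \<noteq> 0" "w = 1 + z"
  shows "z * ((z * X + Y) / w) - (z - 1) * X = (X + z * Y) / w"
proof -
  have "z * ((z * X + Y) / w) - (z - 1) * X = (z * (z * X + Y) - (z - 1) * X * w) / w"
    using assms(1) by (simp add: field_simps)
  also have "z * (z * X + Y) - (z - 1) * X * w = X + z * Y" using assms(2) by algebra
  finally show ?thesis .
qed

lemma alg_G: fixes A1 A2 B1 B2 P4 Pm Pq Dz Di z w :: complex
  assumes "Dz \<noteq> 0" "Di \<noteq> 0" "Pq \<noteq> 0" "Pm \<noteq> 0" "w \<noteq> 0"
  shows "P4 * Pm / (Dz * Di) * ((A1 * A2 / Pm + z * (B1 * B2 / Pm)) / w - 1)
    = z * B2 * B1 * P4 / (w * Dz * Di) + A2 * A1 * P4 / (w * Dz * Di)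
      - Pm * Pq * P4 / (Pq * Dz * Di)"
  using assms by (simp add: field_simps)

lemma part_G:
  fixes z q :: complex
  assumes q: "norm q < 1" and z: "z \<noteq> 0" and z1: "z \<noteq> -1"
    and D1: "qpoch_inf z (q^2) \<noteq> 0" and D2: "qpoch_inf (inverse z) (q^2) \<noteq> 0"
  shows "S_AG4 z q =
           z * qpoch_inf (- z * q) (q^4) * qpoch_inf (- inverse z * q^3) (q^4) * qpoch_inf (q^4) (q^4)
             / ((1 + z) * qpoch_inf z (q^2) * qpoch_inf (inverse z) (q^2))
         + qpoch_inf (- inverse z * q) (q^4) * qpoch_inf (- z * q^3) (q^4) * qpoch_inf (q^4) (q^4)
             / ((1 + z) * qpoch_inf z (q^2) * qpoch_inf (inverse z) (q^2))
         - qpoch_inf (q^2) (q^2)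
             / (qpoch_inf q (q^2) * qpoch_inf z (q^2) * qpoch_inf (inverse z) (q^2))"
    "S_G4 z q =
           z * qpoch_inf (- inverse z * q) (q^4) * qpoch_inf (- z * q^3) (q^4) * qpoch_inf (q^4) (q^4)
             / ((1 + z) * qpoch_inf z (q^2) * qpoch_inf (inverse z) (q^2))
         + qpoch_inf (- z * q) (q^4) * qpoch_inf (- inverse z * q^3) (q^4) * qpoch_inf (q^4) (q^4)
             / ((1 + z) * qpoch_inf z (q^2) * qpoch_inf (inverse z) (q^2))
         - qpoch_inf (q^2) (q^2)
             / (qpoch_inf q (q^2) * qpoch_inf z (q^2) * qpoch_inf (inverse z) (q^2))"
proof -
  have p: "norm (q^2) < 1" and mq: "norm (-q) < 1" using q_norms[OF q] by simp_all
  have p1: "norm (q^2) \<le> 1" using p by simp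
  have iz: "inverse z \<noteq> 0" using z by simp
  have zi: "z * inverse z = 1" using z by simp
  have zne1: "z \<noteq> 1" using D1 qpoch_inf_one[OF p] by auto
  have z1': "1 + z \<noteq> 0" using z1 by (metis add.commute add_eq_0_iff)
  have q4: "(q^2)^2 = q^4" by (simp add: power_mult[symmetric])
  have Pq0: "qpoch_inf q (q^2) \<noteq> 0" by (rule qpoch_inf_nonzero[OF p norm_xp_less[OF q p1]])
  have Pm0: "qpoch_inf (-q) (q^2) \<noteq> 0" by (rule qpoch_inf_nonzero[OF p norm_xp_less[OF mq p1]])
  have Pq2: "qpoch_inf (q^2) (q^2) = qpoch_inf (-q) (q^2) * qpoch_inf q (q^2) * qpoch_inf (q^4) (q^4)"
    using qpoch_inf_split[OF p] qpoch_inf_pm[OF p, of q] unfolding q4 by simp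
  note Bz = bailey[OF p mq z]
  note Bi = bailey[OF p mq iz]
  define E where "E n = (-q)^n * (q^2)^(n choose 2) / (qpoch (q^4) (q^4) n * qpoch (-q) (q^2) n)" for n
  define L where "L n = qpoch z (q^2) n * qpoch (inverse z) (q^2) n" for n
  define P where "P n = qpoch z (q^2) n * qpoch (q^2/z) (q^2) n" for n
  define Qb where "Qb n = qpoch (inverse z) (q^2) n * qpoch (q^2/inverse z) (q^2) n" for n
  have Tb: "T (aB b (q^2)) (q^2) (-q) n = qpoch b (q^2) n * qpoch (q^2/b) (q^2) n * E n" for b n
    unfolding T_def aB_def E_def q4 by simp
  have LP: "L n * (1 - inverse z*(q^2)^n) = (1 - inverse z) * P n" for n
    using qpoch_shift[of "inverse z" "q^2" n] unfolding L_def P_def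
    by (simp add: divide_inverse mult_ac)
  have LQ: "L n * (1 - z*(q^2)^n) = (1 - z) * Qb n" for n
    using qpoch_shift[of z "q^2" n] unfolding L_def Qb_def
    by (simp add: divide_inverse mult_ac)
  have Ldec: "L n = (z * P n + Qb n) / (1 + z)" for n
  proof -
    have "(z - 1) * ((1 + z) * L n - (z * P n + Qb n)) = 0"
      by (rule alg_dec[OF LP[of n] LQ[of n] zi])
    then have "(1 + z) * L n = z * P n + Qb n" using zne1 by simp
    then show ?thesis using z1' by (simp add: field_simps)
  qed
  have LX: "(q^2)^n * L n = z * L n - (z - 1) * P n" for n
    by (rule alg_X[OF LP[of n] zi])
  define tA where "tA n = qpoch z (q^2) n * qpoch (inverse z) (q^2) n * (-1) ^ n * q ^ (n^2)
          / (qpoch (q^4) (q^4) n * qpoch (-q) (q^2) n)" for n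
  define tG where "tG n = qpoch z (q^2) n * qpoch (inverse z) (q^2) n * (-1) ^ n * q ^ (n^2 + 2*n)
          / (qpoch (q^4) (q^4) n * qpoch (-q) (q^2) n)" for n
  define Tz where "Tz = T (aB z (q^2)) (q^2) (-q)"
  define Ti where "Ti = T (aB (inverse z) (q^2)) (q^2) (-q)"
  have tAE: "tA n = L n * E n" for n
    unfolding tA_def L_def E_def sign_pow by simp
  have tA: "tA n = (z * Tz n + Ti n) / (1 + z)" for n
    unfolding tAE Tz_def Ti_def Tb Ldec P_def[symmetric] Qb_def[symmetric] using z1'
    by (simp add: field_simps)
  have tG: "tG n = z * tA n - (z - 1) * Tz n" for n
  proof -
    have "tG n = (q^2)^n * tA n" unfolding tG_def tA_def
      by (simp add: power_add power_mult[symmetric] mult_ac)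
    also have "\<dots> = (z * L n - (z - 1) * P n) * E n" unfolding tAE LX[symmetric] by simp
    also have "\<dots> = z * tA n - (z - 1) * Tz n" unfolding tAE Tz_def Tb P_def by (simp add: algebra_simps)
    finally show ?thesis .
  qed
  define gz where "gz = qpoch_inf (- inverse z * q^3) (q^4) * qpoch_inf (- z * q) (q^4) / qpoch_inf (-q) (q^2)"
  define gi where "gi = qpoch_inf (- z * q^3) (q^4) * qpoch_inf (- inverse z * q) (q^4) / qpoch_inf (-q) (q^2)"
  have gz: "suminf Tz = gz" unfolding Tz_def gz_def Bz(2)[unfolded phi_def] q4
    by (simp add: power3_eq_cube power2_eq_square mult_ac)
  have gi: "suminf Ti = gi" unfolding Ti_def gi_def Bi(2)[unfolded phi_def] q4
    by (simp add: power3_eq_cube power2_eq_square mult_ac)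
  have sA: "tA sums ((z * gz + gi) / (1 + z))"
  proof -
    have "(\<lambda>n. (z * Tz n + Ti n) / (1 + z)) sums ((z * gz + gi) / (1 + z))"
      unfolding gz[symmetric] gi[symmetric] Tz_def Ti_def
      by (intro sums_divide sums_add sums_mult summable_sums Bz(1) Bi(1))
    then show ?thesis unfolding tA[symmetric] .
  qed
  have sG: "tG sums (z * ((z * gz + gi) / (1 + z)) - (z - 1) * gz)"
  proof -
    have "Tz sums gz" using summable_sums[OF Bz(1)] gz unfolding Tz_def by simp
    then have "(\<lambda>n. z * tA n - (z - 1) * Tz n) sums (z * ((z * gz + gi) / (1 + z)) - (z - 1) * gz)"
      by (intro sums_diff sums_mult sA)
    then show ?thesis unfolding tG[symmetric] .
  qed
  have A0: "tA 0 = 1" unfolding tA_def by simp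
  have G0: "tG 0 = 1" unfolding tG_def by simp
  have SA: "S_AG4 z q = qpoch_inf (q^4) (q^4) * qpoch_inf (-q) (q^2)
       / (qpoch_inf z (q^2) * qpoch_inf (inverse z) (q^2)) * ((z * gz + gi) / (1 + z) - 1)"
    unfolding S_AG4_def tA_def[symmetric] sum_if0[OF sums_summable[OF sA]] sums_unique[OF sA, symmetric] A0 ..
  have SG: "S_G4 z q = qpoch_inf (q^4) (q^4) * qpoch_inf (-q) (q^2)
       / (qpoch_inf z (q^2) * qpoch_inf (inverse z) (q^2)) * ((z * ((z * gz + gi) / (1 + z)) - (z - 1) * gz) - 1)"
    unfolding S_G4_def tG_def[symmetric] sum_if0[OF sums_summable[OF sG]] sums_unique[OF sG, symmetric] G0 ..
  show "S_AG4 z q =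
           z * qpoch_inf (- z * q) (q^4) * qpoch_inf (- inverse z * q^3) (q^4) * qpoch_inf (q^4) (q^4)
             / ((1 + z) * qpoch_inf z (q^2) * qpoch_inf (inverse z) (q^2))
         + qpoch_inf (- inverse z * q) (q^4) * qpoch_inf (- z * q^3) (q^4) * qpoch_inf (q^4) (q^4)
             / ((1 + z) * qpoch_inf z (q^2) * qpoch_inf (inverse z) (q^2))
         - qpoch_inf (q^2) (q^2)
             / (qpoch_inf q (q^2) * qpoch_inf z (q^2) * qpoch_inf (inverse z) (q^2))"
    unfolding SA gz_def gi_def Pq2 by (rule alg_AG[OF D1 D2 Pq0 Pm0 z1'])
  show "S_G4 z q =
           z * qpoch_inf (- inverse z * q) (q^4) * qpoch_inf (- z * q^3) (q^4) * qpoch_inf (q^4) (q^4)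
             / ((1 + z) * qpoch_inf z (q^2) * qpoch_inf (inverse z) (q^2))
         + qpoch_inf (- z * q) (q^4) * qpoch_inf (- inverse z * q^3) (q^4) * qpoch_inf (q^4) (q^4)
             / ((1 + z) * qpoch_inf z (q^2) * qpoch_inf (inverse z) (q^2))
         - qpoch_inf (q^2) (q^2)
             / (qpoch_inf q (q^2) * qpoch_inf z (q^2) * qpoch_inf (inverse z) (q^2))"
    unfolding SG alg_Gpre[OF z1' refl] unfolding gz_def gi_def Pq2 by (rule alg_G[OF D1 D2 Pq0 Pm0 z1'])
qed


theorem corollary2p5:
  fixes z q :: complex
  assumes "norm q < 1" and "z \<noteq> 0" and "z \<noteq> -1"
    and "qpoch_inf z (q^2) \<noteq> 0" and "qpoch_inf (inverse z) (q^2) \<noteq> 0"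
  shows "(S_F3 z q =
           qpoch_inf (z*q) (q^2) * qpoch_inf (inverse z * q) (q^2) * qpoch_inf (q^2) (q^2)
             / (qpoch_inf z (q^2) * qpoch_inf (inverse z) (q^2) * qpoch_inf q (q^2))
         - qpoch_inf q q / (qpoch_inf z (q^2) * qpoch_inf (inverse z) (q^2)))
    \<and> (S_G4 z q =
           z * qpoch_inf (- inverse z * q) (q^4) * qpoch_inf (- z * q^3) (q^4) * qpoch_inf (q^4) (q^4)
             / ((1 + z) * qpoch_inf z (q^2) * qpoch_inf (inverse z) (q^2))
         + qpoch_inf (- z * q) (q^4) * qpoch_inf (- inverse z * q^3) (q^4) * qpoch_inf (q^4) (q^4)
             / ((1 + z) * qpoch_inf z (q^2) * qpoch_inf (inverse z) (q^2))
         - qpoch_inf (q^2) (q^2)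
             / (qpoch_inf q (q^2) * qpoch_inf z (q^2) * qpoch_inf (inverse z) (q^2)))
    \<and> (S_AG4 z q =
           z * qpoch_inf (- z * q) (q^4) * qpoch_inf (- inverse z * q^3) (q^4) * qpoch_inf (q^4) (q^4)
             / ((1 + z) * qpoch_inf z (q^2) * qpoch_inf (inverse z) (q^2))
         + qpoch_inf (- inverse z * q) (q^4) * qpoch_inf (- z * q^3) (q^4) * qpoch_inf (q^4) (q^4)
             / ((1 + z) * qpoch_inf z (q^2) * qpoch_inf (inverse z) (q^2))
         - qpoch_inf (q^2) (q^2)
             / (qpoch_inf q (q^2) * qpoch_inf z (q^2) * qpoch_inf (inverse z) (q^2)))"
  using part_F3[OF assms(1,2,4,5)] part_G[OF assms] by blast

end
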